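(* Let $\phi:\mathbb{R}^{n\times n}\to\mathbb{R}$ be differentiable and $L$-gradient Lipschitz, and let $M^\star=\arg\min\phi$ satisfy $M^\star\succeq0$. Let $f(X)=\phi(XX^T)$. For $X\in\mathbb{R}^{n\times r}$ and $\eta\ge0$ with $X^TX+\eta I$ positive definite, the search direction $V=\nabla f(X)(X^TX+\eta I)^{-1}$ satisfies \[ \|V\|_{X,\eta}=\|\nabla f(X)\|_{X,\eta}^*\le2L\|XX^T-M^\star\|_F. \]
   Context: $\phi$ is $L$-gradient Lipschitz if $\|\nabla\phi(M+E)-\nabla\phi(M)\|_F\le L\|E\|_F$ for all $M,E$. Local norm $\|U\|_{X,\eta}=\|U(X^TX+\eta I)^{1/2}\|_F$ and dual local norm $\|U\|_{X,\eta}^*=\|U(X^TX+\eta I)^{-1/2}\|_F$. *)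

theory Defs
  imports "HOL-Analysis.Analysis"
begin

text \<open>Matrices in R^{m x k} are represented as real^'k^'m (rows indexed by 'm).
  The inner product on this type is the Frobenius (trace) inner product and
  norm is the Frobenius norm.\<close>

definition gradient :: "('a::real_inner \<Rightarrow> real) \<Rightarrow> 'a \<Rightarrow> 'a" where
  "gradient F x = (SOME G. (F has_derivative (\<lambda>E. G \<bullet> E)) (at x))"

definition psd_mat :: "real^'n^'n \<Rightarrow> bool" where
  "psd_mat A \<longleftrightarrow> transpose A = A \<and> (\<forall>x. 0 \<le> x \<bullet> (A *v x))"

definition pd_mat :: "real^'n^'n \<Rightarrow> bool" where
  "pd_mat A \<longleftrightarrow> transpose A = A \<and> (\<forall>x. x \<noteq> 0 \<longrightarrow> 0 < x \<bullet> (A *v x))"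

definition mat_sqrt :: "real^'n^'n \<Rightarrow> real^'n^'n" where
  "mat_sqrt A = (THE S. psd_mat S \<and> S ** S = A)"

definition local_norm :: "real^'r^'n \<Rightarrow> real \<Rightarrow> real^'r^'n \<Rightarrow> real" where
  "local_norm X \<eta> U = norm (U ** mat_sqrt (transpose X ** X + \<eta> *\<^sub>R mat 1))"

definition dual_local_norm :: "real^'r^'n \<Rightarrow> real \<Rightarrow> real^'r^'n \<Rightarrow> real" where
  "dual_local_norm X \<eta> U =
     norm (U ** matrix_inv (mat_sqrt (transpose X ** X + \<eta> *\<^sub>R mat 1)))"

end

theory Submission
  imports Defs
begin


lemma sym_inner:
  fixes A :: "real^'n^'n"
  assumes "transpose A = A"
  shows "(A *v x) \<bullet> y = x \<bullet> (A *v y)"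
  by (metis assms dot_lmul_matrix transpose_matrix_vector)

lemma quad0:
  fixes b c :: real
  assumes "\<And>t. b*t + c*t^2 \<le> 0"
  shows "b = 0"
proof (rule ccontr)
  assume nb: "b \<noteq> 0"
  define e where "e = 1 / (\<bar>c\<bar> + 1)"
  have ep: "e > 0" unfolding e_def by simp
  have ce: "\<bar>c\<bar> * e < 1"
  proof -
    have "\<bar>c\<bar> * e = \<bar>c\<bar> / (\<bar>c\<bar>+1)" by (simp add: e_def)
    also have "\<dots> < 1" by (subst divide_less_eq_1_pos) auto
    finally show ?thesis .
  qed
  have "- \<bar>c\<bar> * e \<le> c * e" using ep by (intro mult_right_mono) auto
  then have pos1: "1 + c * e > 0" using ce by linarith
  have id: "b*(b*e) + c*(b*e)^2 = (b*b*e) * (1 + c*e)"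
    by (simp add: power2_eq_square algebra_simps)
  have "b*b > 0" using nb by (metis not_real_square_gt_zero)
  then have "b*b*e > 0" using ep by simp
  then have "b*(b*e) + c*(b*e)^2 > 0" unfolding id using pos1 by simp
  with assms[of "b*e"] show False by linarith
qed

lemma sym_eigvec:
  fixes A :: "real^'n^'n"
  assumes sym: "transpose A = A" and W: "subspace W"
    and inv: "\<And>x. x \<in> W \<Longrightarrow> A *v x \<in> W"
    and ne: "w0 \<in> W" "w0 \<noteq> 0"
  obtains v where "v \<in> W" "norm v = 1" "A *v v = (v \<bullet> (A *v v)) *\<^sub>R v"
proof -
  let ?S = "W \<inter> sphere 0 1"
  have cS: "compact ?S"
    using closed_subspace[OF W] compact_sphere closed_Int_compact by blast
  have "w0 /\<^sub>R norm w0 \<in> ?S" using ne W by (simp add: subspace_scale)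
  then have neS: "?S \<noteq> {}" by blast
  have cont: "continuous_on ?S (\<lambda>x. x \<bullet> (A *v x))"
    by (intro continuous_intros linear_continuous_on) (simp add: linear_linear)
  obtain v where vS: "v \<in> ?S" and vmax: "\<And>y. y \<in> ?S \<Longrightarrow> y \<bullet> (A *v y) \<le> v \<bullet> (A *v v)"
    using continuous_attains_sup[OF cS neS cont] by blast
  define M where "M = v \<bullet> (A *v v)"
  have vW: "v \<in> W" and vn: "norm v = 1" using vS by auto
  have vv: "v \<bullet> v = 1" using vn by (simp add: norm_eq_1)
  have key: "w \<bullet> (A *v v) = 0" if wW: "w \<in> W" and wv: "w \<bullet> v = 0" for w
  proof -
    have "(2*(w \<bullet> (A *v v)))*t + (w \<bullet> (A *v w) - M * (w \<bullet> w)) * t^2 \<le> 0" for t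
    proof -
      define u where "u = v + t *\<^sub>R w"
      have uu: "u \<bullet> u = 1 + t^2 * (w \<bullet> w)"
        unfolding u_def using vv wv
        by (simp add: inner_add_left inner_add_right inner_commute power2_eq_square)
      have upos: "u \<bullet> u > 0" unfolding uu by (simp add: add_pos_nonneg)
      then have un: "norm u \<noteq> 0" by auto
      have uW: "u \<in> W" unfolding u_def using W vW wW by (simp add: subspace_add subspace_scale)
      have "u /\<^sub>R norm u \<in> ?S" using uW un W by (simp add: subspace_scale)
      then have "(u /\<^sub>R norm u) \<bullet> (A *v (u /\<^sub>R norm u)) \<le> M"
        using vmax M_def by blast
      moreover have "(u /\<^sub>R norm u) \<bullet> (A *v (u /\<^sub>R norm u)) = (u \<bullet> (A *v u)) / (norm u)^2"
        using un by (simp add: matrix_vector_mult_scaleR power2_eq_square divide_inverse inverse_mult_distrib mult_ac)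
      ultimately have "(u \<bullet> (A *v u)) / (norm u)^2 \<le> M" by simp
      then have "u \<bullet> (A *v u) \<le> M * (u \<bullet> u)"
        using un by (simp add: divide_le_eq power2_norm_eq_inner mult.commute)
      moreover have "u \<bullet> (A *v u) = M + 2*t*(w \<bullet> (A *v v)) + t^2 * (w \<bullet> (A *v w))"
      proof -
        have "v \<bullet> (A *v w) = w \<bullet> (A *v v)"
          using sym_inner[OF sym, of v w] by (simp add: inner_commute)
        then show ?thesis
          unfolding u_def M_def
          by (simp add: matrix_vector_right_distrib matrix_vector_mult_scaleR inner_add_left
              inner_add_right power2_eq_square algebra_simps)
      qed
      ultimately show ?thesis unfolding uu by (simp add: algebra_simps)
    qed
    then have "2*(w \<bullet> (A *v v)) = 0" by (rule quad0)
    then show ?thesis by simp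
  qed
  define z where "z = A *v v - M *\<^sub>R v"
  have zW: "z \<in> W" unfolding z_def using inv[OF vW] vW W by (simp add: subspace_diff subspace_scale)
  have "v \<bullet> z = 0" unfolding z_def M_def using vv
    by (simp add: inner_diff_right)
  then have zv: "z \<bullet> v = 0" by (simp add: inner_commute)
  have e1: "z \<bullet> (A *v v - M *\<^sub>R v) = z \<bullet> (A *v v) - M * (z \<bullet> v)"
    by (simp only: inner_diff_right inner_scaleR_right)
  have "z \<bullet> z = z \<bullet> (A *v v) - M * (z \<bullet> v)"
    using e1 unfolding z_def[symmetric] .
  also have "\<dots> = 0" using key[OF zW zv] zv by simp
  finally have "z = 0" by simp
  then have "A *v v = M *\<^sub>R v" unfolding z_def by simp
  then show ?thesis by (intro that[OF vW vn]) (unfold M_def[symmetric])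
qed



definition eigsys :: "real^'n^'n \<Rightarrow> (real^'n) set \<Rightarrow> bool" where
  "eigsys A B \<longleftrightarrow> finite B \<and> pairwise orthogonal B \<and>
     (\<forall>b\<in>B. norm b = 1 \<and> A *v b = (b \<bullet> (A *v b)) *\<^sub>R b)"

lemma eigsys_extend:
  fixes A :: "real^'n^'n"
  assumes sym: "transpose A = A" and E: "eigsys A B"
  shows "\<exists>B'. eigsys A B' \<and> span B' = UNIV"
  using E
proof (induction "DIM(real^'n) - card B" arbitrary: B rule: less_induct)
  case less
  show ?case
  proof (cases "span B = UNIV")
    case True
    then show ?thesis using less.prems by blast
  next
    case False
    have fin: "finite B" and po: "pairwise orthogonal B"
      and nb: "\<And>b. b \<in> B \<Longrightarrow> norm b = 1"
      and ev: "\<And>b. b \<in> B \<Longrightarrow> A *v b = (b \<bullet> (A *v b)) *\<^sub>R b"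
      using less.prems unfolding eigsys_def by auto
    have "dim B \<noteq> DIM(real^'n)" using False dim_eq_full by blast
    then have "dim B < DIM(real^'n)" using dim_subset_UNIV[of B] by simp
    then obtain x where x0: "x \<noteq> 0" and xo: "\<And>y. y \<in> span B \<Longrightarrow> orthogonal x y"
      using orthogonal_to_subspace_exists by blast
    define W where "W = {y. \<forall>b\<in>B. b \<bullet> y = 0}"
    have W: "subspace W" unfolding W_def subspace_def
      by (simp add: inner_add_right)
    have "b \<bullet> x = 0" if "b \<in> B" for b
      using xo[OF span_base[OF that]] by (simp add: orthogonal_def inner_commute)
    then have xW: "x \<in> W" unfolding W_def by blast
    have invW: "A *v y \<in> W" if "y \<in> W" for y
    proof -
      have "b \<bullet> (A *v y) = 0" if "b \<in> B" for b
      proof -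
        have "b \<bullet> (A *v y) = (A *v b) \<bullet> y" using sym_inner[OF sym, of b y] by simp
        also have "\<dots> = (b \<bullet> (A *v b)) * (b \<bullet> y)"
          by (subst (1) ev[OF that]) (simp only: inner_scaleR_left)
        also have "\<dots> = 0" using \<open>y \<in> W\<close> that unfolding W_def by simp
        finally show ?thesis .
      qed
      then show ?thesis unfolding W_def by blast
    qed
    obtain v where vW: "v \<in> W" and vn: "norm v = 1" and vev: "A *v v = (v \<bullet> (A *v v)) *\<^sub>R v"
      using sym_eigvec[OF sym W invW xW x0] by blast
    have vv: "v \<bullet> v = 1" using vn by (simp add: norm_eq_1)
    have vB: "v \<notin> B"
    proof
      assume "v \<in> B"
      then have "v \<bullet> v = 0" using vW unfolding W_def by blast
      then show False using vv by simp
    qed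
    have E2: "eigsys A (insert v B)"
      unfolding eigsys_def
    proof (intro conjI)
      show "finite (insert v B)" using fin by simp
      show "pairwise orthogonal (insert v B)"
        unfolding pairwise_insert
        using po vW unfolding W_def orthogonal_def
        by (auto simp: inner_commute)
      show "\<forall>b\<in>insert v B. norm b = 1 \<and> A *v b = (b \<bullet> (A *v b)) *\<^sub>R b"
        using nb ev vn vev by auto
    qed
    have po2: "pairwise orthogonal (insert v B)" and n2: "\<And>b. b \<in> insert v B \<Longrightarrow> norm b = 1"
      using E2 unfolding eigsys_def by auto
    have "0 \<notin> insert v B" using n2 by force
    then have ind: "independent (insert v B)"
      using po2 pairwise_orthogonal_independent by blast
    have "card (insert v B) \<le> DIM(real^'n)" using independent_bound[OF ind] by blast
    moreover have "card (insert v B) = Suc (card B)" using fin vB by simp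
    ultimately have "DIM(real^'n) - card (insert v B) < DIM(real^'n) - card B" by simp
    then show ?thesis using less.hyps E2 by blast
  qed
qed

lemma spectral:
  fixes A :: "real^'n^'n"
  assumes sym: "transpose A = A"
  obtains B where "eigsys A B" "span B = UNIV"
proof -
  have "eigsys A {}" unfolding eigsys_def by simp
  then show ?thesis using eigsys_extend[OF sym] that by blast
qed

lemma orthonormal_inner:
  assumes "pairwise orthogonal B" "\<And>b. b \<in> B \<Longrightarrow> norm b = 1" "b \<in> B" "c \<in> B"
  shows "b \<bullet> c = (if b = c then 1 else 0)"
  using assms by (auto simp: pairwise_def orthogonal_def norm_eq_1)

lemma expand_sum:
  fixes B :: "(real^'n) set"
  assumes "finite B" "pairwise orthogonal B" "\<And>b. b \<in> B \<Longrightarrow> norm b = 1" "span B = UNIV"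
  shows "(\<Sum>b\<in>B. (x \<bullet> b) *\<^sub>R b) = x"
  using orthonormal_basis_expand[of B x] assms by auto



lemma mv_sum:
  fixes A :: "real^'m^'n"
  assumes "finite B"
  shows "A *v (\<Sum>b\<in>B. g b) = (\<Sum>b\<in>B. A *v g b)"
  using assms by (induction rule: finite_induct) (simp_all add: matrix_vector_right_distrib)

lemma sqrt_exists:
  fixes A :: "real^'n^'n"
  assumes psd: "psd_mat A"
  shows "\<exists>S. psd_mat S \<and> S ** S = A"
proof -
  have sym: "transpose A = A" using psd psd_mat_def by auto
  obtain B where E: "eigsys A B" and sp: "span B = UNIV" using spectral[OF sym] by blast
  have fin: "finite B" and po: "pairwise orthogonal B" and nb: "\<And>b. b\<in>B \<Longrightarrow> norm b = 1"
    and ev: "\<And>b. b\<in>B \<Longrightarrow> A *v b = (b \<bullet> (A *v b)) *\<^sub>R b"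
    using E unfolding eigsys_def by auto
  define lam where "lam b = b \<bullet> (A *v b)" for b
  have lam0: "lam b \<ge> 0" for b using psd unfolding psd_mat_def lam_def by auto
  have ev': "A *v b = lam b *\<^sub>R b" if "b\<in>B" for b using ev[OF that] unfolding lam_def .
  define f where "f x = (\<Sum>b\<in>B. (sqrt (lam b) * (b \<bullet> x)) *\<^sub>R b)" for x
  have lin: "linear f"
  proof (rule linearI)
    show "f (x + y) = f x + f y" for x y
      unfolding f_def by (simp add: inner_add_right distrib_left scaleR_add_left sum.distrib)
    show "f (c *\<^sub>R x) = c *\<^sub>R f x" for c x
      unfolding f_def by (simp add: scaleR_sum_right mult_ac)
  qed
  define S where "S = matrix f"
  have Sx: "S *v x = f x" for x
    unfolding S_def using fun_cong[OF matrix_vector_mul(2)[OF lin]] by simp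
  have inner_f: "b \<bullet> f x = sqrt (lam b) * (b \<bullet> x)" if bB: "b \<in> B" for b x
  proof -
    have "b \<bullet> f x = (\<Sum>c\<in>B. sqrt (lam c) * (c \<bullet> x) * (b \<bullet> c))"
      unfolding f_def by (simp add: inner_sum_right)
    also have "\<dots> = (\<Sum>c\<in>B. if c = b then sqrt (lam b) * (b \<bullet> x) else 0)"
      by (rule sum.cong) (auto simp: orthonormal_inner[OF po nb bB])
    also have "\<dots> = sqrt (lam b) * (b \<bullet> x)" using fin bB by simp
    finally show ?thesis .
  qed
  have SSx: "S *v (S *v x) = A *v x" for x
  proof -
    have "S *v (S *v x) = f (f x)" by (simp add: Sx)
    also have "\<dots> = (\<Sum>b\<in>B. (sqrt (lam b) * (b \<bullet> f x)) *\<^sub>R b)" by (rule f_def)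
    also have "\<dots> = (\<Sum>b\<in>B. (x \<bullet> b) *\<^sub>R (lam b *\<^sub>R b))"
    proof (rule sum.cong)
      fix b assume bB: "b \<in> B"
      have "sqrt (lam b) * sqrt (lam b) = lam b" using lam0[of b] by simp
      then show "(sqrt (lam b) * (b \<bullet> f x)) *\<^sub>R b = (x \<bullet> b) *\<^sub>R (lam b *\<^sub>R b)"
        using inner_f[OF bB] by (simp add: inner_commute mult_ac)
    qed simp
    also have "\<dots> = (\<Sum>b\<in>B. A *v ((x \<bullet> b) *\<^sub>R b))"
      by (rule sum.cong) (simp_all add: ev' matrix_vector_mult_scaleR)
    also have "\<dots> = A *v (\<Sum>b\<in>B. (x \<bullet> b) *\<^sub>R b)" by (rule mv_sum[OF fin, symmetric])
    also have "\<dots> = A *v x" using expand_sum[OF fin po nb sp] by simp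
    finally show ?thesis .
  qed
  have SS: "S ** S = A" unfolding matrix_eq using SSx by (simp add: matrix_vector_mul_assoc)
  have fy: "x \<bullet> f y = (\<Sum>b\<in>B. sqrt (lam b) * (b \<bullet> y) * (x \<bullet> b))" for x y
    unfolding f_def by (simp add: inner_sum_right)
  have Ssym: "transpose S = S"
    unfolding matrix_eq
  proof
    fix x
    show "transpose S *v x = S *v x"
    proof (rule vector_eq_rdot[THEN iffD1], rule allI)
      fix y
      have "(transpose S *v x) \<bullet> y = x \<bullet> (S *v y)" by (simp add: dot_lmul_matrix)
      also have "\<dots> = (\<Sum>b\<in>B. sqrt (lam b) * (b \<bullet> y) * (x \<bullet> b))" by (simp add: Sx fy)
      also have "\<dots> = (\<Sum>b\<in>B. sqrt (lam b) * (b \<bullet> x) * (y \<bullet> b))"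
        by (simp add: inner_commute mult_ac)
      also have "\<dots> = y \<bullet> (S *v x)" by (simp add: Sx fy)
      also have "\<dots> = (S *v x) \<bullet> y" by (simp add: inner_commute)
      finally show "(transpose S *v x) \<bullet> y = (S *v x) \<bullet> y" .
    qed
  qed
  have "0 \<le> x \<bullet> (S *v x)" for x
  proof -
    have "x \<bullet> (S *v x) = (\<Sum>b\<in>B. sqrt (lam b) * (b \<bullet> x) * (x \<bullet> b))" by (simp add: Sx fy)
    also have "\<dots> \<ge> 0"
    proof (rule sum_nonneg)
      fix b
      have "(b \<bullet> x) * (x \<bullet> b) \<ge> 0" by (simp add: inner_commute)
      then show "0 \<le> sqrt (lam b) * (b \<bullet> x) * (x \<bullet> b)"
        using lam0[of b] by (simp add: mult.assoc)
    qed
    finally show ?thesis .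
  qed
  then have "psd_mat S" unfolding psd_mat_def using Ssym by blast
  then show ?thesis using SS by blast
qed



lemma psd_kernel:
  fixes S :: "real^'n^'n"
  assumes psd: "psd_mat S" and z: "x \<bullet> (S *v x) = 0"
  shows "S *v x = 0"
proof -
  have sym: "transpose S = S" using psd psd_mat_def by auto
  define w where "w = S *v x"
  have "(-2*(w \<bullet> (S *v x)))*t + (-(w \<bullet> (S *v w)))*t^2 \<le> 0" for t
  proof -
    have "0 \<le> (x + t *\<^sub>R w) \<bullet> (S *v (x + t *\<^sub>R w))" using psd psd_mat_def by blast
    also have "(x + t *\<^sub>R w) \<bullet> (S *v (x + t *\<^sub>R w))
        = x \<bullet> (S *v x) + t * (x \<bullet> (S *v w)) + t * (w \<bullet> (S *v x)) + t^2 * (w \<bullet> (S *v w))"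
      by (simp add: matrix_vector_right_distrib matrix_vector_mult_scaleR inner_add_left
          inner_add_right power2_eq_square algebra_simps)
    also have "x \<bullet> (S *v w) = w \<bullet> (S *v x)"
      using sym_inner[OF sym, of x w] by (simp add: inner_commute)
    finally show ?thesis using z by (simp add: algebra_simps)
  qed
  then have "-2*(w \<bullet> (S *v x)) = 0" by (rule quad0)
  then have "w \<bullet> w = 0" unfolding w_def by simp
  then show ?thesis unfolding w_def by simp
qed

lemma transpose_diff: "transpose (A - B) = transpose A - transpose (B::real^'n^'m)"
  by (simp add: transpose_def vec_eq_iff)

lemma sqrt_unique:
  fixes S T :: "real^'n^'n"
  assumes pS: "psd_mat S" and pT: "psd_mat T" and eq: "S ** S = T ** T"
  shows "S = T"
proof -
  have sS: "transpose S = S" using pS psd_mat_def by auto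
  have sT: "transpose T = T" using pT psd_mat_def by auto
  define D where "D = S - T"
  have sD: "transpose D = D" unfolding D_def transpose_diff sS sT ..
  obtain B where E: "eigsys D B" and sp: "span B = UNIV" using spectral[OF sD] by blast
  have fin: "finite B" and po: "pairwise orthogonal B" and nb: "\<And>b. b\<in>B \<Longrightarrow> norm b = 1"
    and ev: "\<And>b. b\<in>B \<Longrightarrow> D *v b = (b \<bullet> (D *v b)) *\<^sub>R b"
    using E unfolding eigsys_def by auto
  have Db0: "D *v b = 0" if bB: "b \<in> B" for b
  proof -
    define \<mu> where "\<mu> = b \<bullet> (D *v b)"
    have Db: "D *v b = \<mu> *\<^sub>R b" using ev[OF bB] unfolding \<mu>_def .
    have SS: "S *v (S *v b) = T *v (T *v b)" by (simp add: matrix_vector_mul_assoc eq)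
    have dec: "S *v (S *v b) - T *v (T *v b) = S *v (D *v b) + D *v (T *v b)"
      unfolding D_def by (simp add: matrix_vector_mult_diff_rdistrib matrix_vector_mult_diff_distrib)
    have "0 = b \<bullet> (S *v (D *v b)) + b \<bullet> (D *v (T *v b))"
      using SS dec by (metis diff_self inner_add_right inner_zero_right)
    also have "b \<bullet> (S *v (D *v b)) = \<mu> * (b \<bullet> (S *v b))"
      unfolding Db by (simp add: matrix_vector_mult_scaleR)
    also have "b \<bullet> (D *v (T *v b)) = (D *v b) \<bullet> (T *v b)"
      using sym_inner[OF sD, of b "T *v b"] by simp
    also have "\<dots> = \<mu> * (b \<bullet> (T *v b))" unfolding Db by simp
    finally have m0: "\<mu> * (b \<bullet> (S *v b) + b \<bullet> (T *v b)) = 0" by (simp add: algebra_simps)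
    have "\<mu> = 0"
    proof (rule ccontr)
      assume "\<mu> \<noteq> 0"
      then have s0: "b \<bullet> (S *v b) + b \<bullet> (T *v b) = 0" using m0 by simp
      have "0 \<le> b \<bullet> (S *v b)" "0 \<le> b \<bullet> (T *v b)" using pS pT psd_mat_def by blast+
      then have "b \<bullet> (S *v b) = 0" "b \<bullet> (T *v b) = 0" using s0 by linarith+
      then have "S *v b = 0" "T *v b = 0" using psd_kernel pS pT by blast+
      then have "D *v b = 0" unfolding D_def by (simp add: matrix_vector_mult_diff_rdistrib)
      then have "\<mu> *\<^sub>R b = 0" using Db by simp
      moreover have "b \<noteq> 0" using nb[OF bB] by auto
      ultimately show False using \<open>\<mu> \<noteq> 0\<close> by simp
    qed
    then show ?thesis using Db by simp
  qed
  have "D *v x = 0 *v x" for x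
  proof -
    have "D *v x = D *v (\<Sum>b\<in>B. (x \<bullet> b) *\<^sub>R b)" using expand_sum[OF fin po nb sp] by simp
    also have "\<dots> = (\<Sum>b\<in>B. D *v ((x \<bullet> b) *\<^sub>R b))" by (rule mv_sum[OF fin])
    also have "\<dots> = 0" by (rule sum.neutral) (simp add: matrix_vector_mult_scaleR Db0)
    finally show ?thesis by simp
  qed
  then have "D = 0" using matrix_eq by blast
  then show ?thesis unfolding D_def by simp
qed

lemma mat_sqrt_props:
  fixes A :: "real^'n^'n"
  assumes "psd_mat A"
  shows "psd_mat (mat_sqrt A) \<and> mat_sqrt A ** mat_sqrt A = A"
proof -
  have "\<exists>!S. psd_mat S \<and> S ** S = A"
    using sqrt_exists[OF assms] sqrt_unique by blast
  then show ?thesis unfolding mat_sqrt_def by (rule theI')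
qed



lemma mm_add_r: "((A::real^'k^'m) + B) ** C = A ** C + B ** C"
  by (simp add: matrix_matrix_mult_def vec_eq_iff sum.distrib distrib_right)

lemma transpose_add: "transpose ((A::real^'n^'m) + B) = transpose A + transpose B"
  by (simp add: transpose_def vec_eq_iff)

lemma bilin_mt: "bilinear (\<lambda>(A::real^'k^'m) (B::real^'k^'n). A ** transpose B)"
  unfolding bilinear_def
proof (intro conjI allI)
  fix A :: "real^'k^'m"
  show "linear (\<lambda>B::real^'k^'n. A ** transpose B)"
    by (rule linearI) (simp_all add: transpose_add matrix_add_ldistrib transpose_scalar matrix_scalar_ac scalar_matrix_assoc[symmetric])
next
  fix B :: "real^'k^'n"
  show "linear (\<lambda>A::real^'k^'m. A ** transpose B)"
    by (rule linearI) (simp_all add: mm_add_r scalar_matrix_assoc)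
qed

lemma deriv_sq:
  "((\<lambda>Y::real^'r^'n. Y ** transpose Y) has_derivative (\<lambda>E. X ** transpose E + E ** transpose X)) (at X)"
proof -
  have bb: "bounded_bilinear (\<lambda>(A::real^'r^'n) (B::real^'r^'n). A ** transpose B)"
    using bilin_mt bilinear_conv_bounded_bilinear by blast
  show ?thesis
    using bounded_bilinear.FDERIV[OF bb has_derivative_ident has_derivative_ident, of X UNIV]
    by simp
qed

lemma inner_mm1: "(A::real^'k^'m) \<bullet> (B ** C) = (A ** transpose C) \<bullet> (B::real^'j^'m)"
  apply (simp add: inner_vec_def matrix_matrix_mult_def transpose_def sum_distrib_left sum_distrib_right mult_ac)
  apply (rule sum.cong[OF refl])
  apply (rule sum.swap)
  done

lemma inner_transpose: "transpose (A::real^'k^'m) \<bullet> transpose B = A \<bullet> B"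
  by (simp add: inner_vec_def transpose_def) (rule sum.swap)

lemma inner_mm2: "(A::real^'k^'m) \<bullet> (B ** C) = (transpose B ** A) \<bullet> (C::real^'k^'j)"
proof -
  have "A \<bullet> (B ** C) = transpose A \<bullet> transpose (B ** C)" by (simp add: inner_transpose)
  also have "\<dots> = transpose A \<bullet> (transpose C ** transpose B)" by (simp add: matrix_transpose_mul)
  also have "\<dots> = (transpose A ** B) \<bullet> transpose C" by (simp add: inner_mm1)
  also have "\<dots> = transpose (transpose A ** B) \<bullet> C"
    using inner_transpose[of "transpose (transpose A ** B)" C] by simp
  also have "\<dots> = (transpose B ** A) \<bullet> C" by (simp add: matrix_transpose_mul)
  finally show ?thesis .
qed

lemma norm_transpose: "norm (transpose (A::real^'k^'m)) = norm A"
  by (simp add: norm_eq_sqrt_inner inner_transpose)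

lemma grad_works:
  fixes F :: "'a::euclidean_space \<Rightarrow> real"
  assumes "(F has_derivative F') (at x)"
  shows "(F has_derivative (\<lambda>E. gradient F x \<bullet> E)) (at x)"
proof -
  have lin: "linear F'" using assms has_derivative_linear by blast
  have "F' = (\<lambda>E. adjoint F' 1 \<bullet> E)"
  proof
    fix E
    show "F' E = adjoint F' 1 \<bullet> E"
      using adjoint_works[OF lin, of E 1] by (simp add: inner_commute)
  qed
  then have "\<exists>G. (F has_derivative (\<lambda>E. G \<bullet> E)) (at x)" using assms by metis
  then show ?thesis unfolding gradient_def by (rule someI_ex)
qed

lemma grad_unique:
  fixes F :: "'a::euclidean_space \<Rightarrow> real"
  assumes d: "(F has_derivative (\<lambda>E. G \<bullet> E)) (at x)"
  shows "gradient F x = G"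
proof -
  have "(\<lambda>E. gradient F x \<bullet> E) = (\<lambda>E. G \<bullet> E)"
    using has_derivative_unique[OF grad_works[OF d] d] .
  then have "(gradient F x - G) \<bullet> (gradient F x - G) = 0"
    by (metis inner_diff_left diff_self)
  then show ?thesis by simp
qed

lemma row_bound:
  fixes M :: "real^'k^'m" and B :: "real^'j^'k"
  assumes b: "\<And>a. norm (transpose B *v a) \<le> norm a"
  shows "norm (M ** B) \<le> norm M"
proof -
  have row: "(M ** B) $ i = transpose B *v (M $ i)" for i
    by (simp add: vec_eq_iff matrix_matrix_mult_def matrix_vector_mult_def transpose_def mult_ac)
  show ?thesis
    unfolding norm_vec_def[of "M ** B"] norm_vec_def[of M]
  proof (rule L2_set_mono)
    fix i show "norm ((M ** B) $ i) \<le> norm (M $ i)" unfolding row by (rule b)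
  qed simp
qed

lemma transpose_opbound:
  fixes B :: "real^'j^'k"
  assumes b: "\<And>v. norm (B *v v) \<le> norm v"
  shows "norm (transpose B *v a) \<le> norm a"
proof -
  define u where "u = transpose B *v a"
  have "u \<bullet> u = a \<bullet> (B *v u)"
    unfolding u_def by (simp add: dot_lmul_matrix)
  also have "\<dots> \<le> norm a * norm (B *v u)" by (rule norm_cauchy_schwarz)
  also have "\<dots> \<le> norm a * norm u" using b[of u] by (simp add: mult_left_mono)
  finally have "norm u * norm u \<le> norm a * norm u" by (simp add: power2_norm_eq_inner[symmetric] power2_eq_square)
  then have "norm u \<le> norm a"
    by (cases "norm u = 0") (auto simp: mult_le_cancel_right)
  then show ?thesis unfolding u_def .
qed

lemma inv_props:
  fixes A :: "real^'n^'n"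
  assumes "invertible A"
  shows "A ** matrix_inv A = mat 1 \<and> matrix_inv A ** A = mat 1"
  using assms unfolding invertible_def matrix_inv_def by (rule someI_ex)



theorem lemma23:
  fixes \<phi> :: "real^'n^'n \<Rightarrow> real"
    and L \<eta> :: real
    and Mstar :: "real^'n^'n"
    and X :: "real^'r^'n"
  assumes diff: "\<And>M. \<phi> differentiable (at M)"
    and lip: "\<And>M E. norm (gradient \<phi> (M + E) - gradient \<phi> M) \<le> L * norm E"
    and argmin: "\<And>M. \<phi> Mstar \<le> \<phi> M"
    and psd: "psd_mat Mstar"
    and eta: "\<eta> \<ge> 0"
    and pd: "pd_mat (transpose X ** X + \<eta> *\<^sub>R mat 1)"
  shows "local_norm X \<eta>
           (gradient (\<lambda>Y::real^'r^'n. \<phi> (Y ** transpose Y)) X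
              ** matrix_inv (transpose X ** X + \<eta> *\<^sub>R mat 1))
         = dual_local_norm X \<eta> (gradient (\<lambda>Y::real^'r^'n. \<phi> (Y ** transpose Y)) X)
       \<and> dual_local_norm X \<eta> (gradient (\<lambda>Y::real^'r^'n. \<phi> (Y ** transpose Y)) X)
         \<le> 2 * L * norm (X ** transpose X - Mstar)"
proof -
  define H where "H = transpose X ** X + \<eta> *\<^sub>R mat 1"
  define S where "S = mat_sqrt H"
  define Si where "Si = matrix_inv S"
  define Hi where "Hi = matrix_inv H"
  define Gf where "Gf = gradient (\<lambda>Y::real^'r^'n. \<phi> (Y ** transpose Y)) X"
  define G where "G = gradient \<phi> (X ** transpose X)"
  have pdH: "pd_mat H" using pd unfolding H_def .
  have symH: "transpose H = H" and posH: "\<And>x. x \<noteq> 0 \<Longrightarrow> 0 < x \<bullet> (H *v x)"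
    using pdH unfolding pd_mat_def by auto
  have psdH: "psd_mat H" unfolding psd_mat_def
  proof (intro conjI allI symH)
    fix x show "0 \<le> x \<bullet> (H *v x)" using posH[of x] by (cases "x = 0") auto
  qed
  have pS: "psd_mat S" and SS: "S ** S = H" using mat_sqrt_props[OF psdH] unfolding S_def by auto
  have symS: "transpose S = S" using pS psd_mat_def by auto
  have kerH: "x = 0" if "H *v x = 0" for x
    using posH[of x] that by (cases "x = 0") auto
  have invH: "invertible H"
    unfolding invertible_left_inverse matrix_left_invertible_ker using kerH by blast
  have invS: "invertible S"
    unfolding invertible_left_inverse matrix_left_invertible_ker
  proof (intro allI impI)
    fix x assume "S *v x = 0"
    then have "H *v x = 0" by (metis SS matrix_vector_mul_assoc matrix_vector_mult_0_right)
    then show "x = 0" by (rule kerH)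
  qed
  have SSi: "S ** Si = mat 1" and SiS: "Si ** S = mat 1" using inv_props[OF invS] unfolding Si_def by auto
  have HiH: "Hi ** H = mat 1" using inv_props[OF invH] unfolding Hi_def by auto
  have HiS: "Hi ** S = Si"
  proof -
    have "Hi ** S = (Hi ** S) ** (S ** Si)" by (simp add: SSi)
    also have "\<dots> = (Hi ** (S ** S)) ** Si" by (simp add: matrix_mul_assoc)
    also have "\<dots> = Si" by (simp add: SS HiH)
    finally show ?thesis .
  qed
  have part1: "local_norm X \<eta> (Gf ** Hi) = dual_local_norm X \<eta> Gf"
    unfolding local_norm_def dual_local_norm_def H_def[symmetric] S_def[symmetric] Si_def[symmetric]
    by (simp add: matrix_mul_assoc[symmetric] HiS)
  have dphi: "(\<phi> has_derivative (\<lambda>E. G \<bullet> E)) (at (X ** transpose X))"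
    unfolding G_def using diff by (metis differentiable_def grad_works)
  have "((\<phi> \<circ> (\<lambda>Y::real^'r^'n. Y ** transpose Y)) has_derivative
          ((\<lambda>E. G \<bullet> E) \<circ> (\<lambda>E. X ** transpose E + E ** transpose X))) (at X)"
    by (rule diff_chain_at[OF deriv_sq dphi])
  moreover have "((\<lambda>E. G \<bullet> E) \<circ> (\<lambda>E. X ** transpose E + E ** transpose X))
      = (\<lambda>E. ((G + transpose G) ** X) \<bullet> E)"
  proof
    fix E :: "real^'r^'n"
    have "G \<bullet> (X ** transpose E) = (transpose G ** X) \<bullet> E"
    proof -
      have "G \<bullet> (X ** transpose E) = (transpose X ** G) \<bullet> transpose E" by (rule inner_mm2)
      also have "\<dots> = transpose (transpose X ** G) \<bullet> E"
        using inner_transpose[of "transpose (transpose X ** G)" E] by simp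
      also have "\<dots> = (transpose G ** X) \<bullet> E" by (simp add: matrix_transpose_mul)
      finally show ?thesis .
    qed
    moreover have "G \<bullet> (E ** transpose X) = (G ** X) \<bullet> E"
      using inner_mm1[of G E "transpose X"] by simp
    ultimately show "((\<lambda>E. G \<bullet> E) \<circ> (\<lambda>E. X ** transpose E + E ** transpose X)) E
        = ((G + transpose G) ** X) \<bullet> E"
      by (simp add: inner_add_right mm_add_r inner_add_left)
  qed
  ultimately have "((\<lambda>Y::real^'r^'n. \<phi> (Y ** transpose Y)) has_derivative
          (\<lambda>E. ((G + transpose G) ** X) \<bullet> E)) (at X)"
    by (simp add: o_def)
  then have Gf: "Gf = (G + transpose G) ** X" unfolding Gf_def by (rule grad_unique)
  have g0: "gradient \<phi> Mstar = 0"
  proof -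
    obtain D where "(\<phi> has_derivative D) (at Mstar)" using diff differentiable_def by blast
    then have d: "(\<phi> has_derivative (\<lambda>E. gradient \<phi> Mstar \<bullet> E)) (at Mstar)" by (rule grad_works)
    have "(\<lambda>E. gradient \<phi> Mstar \<bullet> E) = (\<lambda>v. 0)"
      by (rule differential_zero_maxmin[OF _ open_UNIV d]) (use argmin in auto)
    then have "gradient \<phi> Mstar \<bullet> gradient \<phi> Mstar = 0" by metis
    then show ?thesis by simp
  qed
  have Gb: "norm G \<le> L * norm (X ** transpose X - Mstar)"
    using lip[of Mstar "X ** transpose X - Mstar"] g0 unfolding G_def by simp
  have opb: "norm ((X ** Si) *v v) \<le> norm v" for v
  proof -
    define u where "u = Si *v v"
    have Su: "S *v u = v" unfolding u_def by (simp add: matrix_vector_mul_assoc SSi)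
    have e: "(X ** Si) *v v = X *v u" unfolding u_def by (simp add: matrix_vector_mul_assoc)
    have "(X *v u) \<bullet> (X *v u) = u \<bullet> (transpose X *v (X *v u))"
      by (metis dot_lmul_matrix vector_transpose_matrix)
    also have "\<dots> = u \<bullet> (H *v u) - \<eta> * (u \<bullet> u)"
      unfolding H_def by (simp add: matrix_vector_mult_add_rdistrib matrix_vector_mul_assoc inner_add_right
          scaleR_matrix_vector_assoc[symmetric])
    also have "\<dots> \<le> u \<bullet> (H *v u)" using eta by simp
    also have "u \<bullet> (H *v u) = (S *v u) \<bullet> (S *v u)"
      using sym_inner[OF symS, of u "S *v u"] by (simp add: SS[symmetric] matrix_vector_mul_assoc)
    also have "\<dots> = v \<bullet> v" using Su by simp
    finally have "norm (X *v u) ^ 2 \<le> norm v ^ 2" by (simp add: power2_norm_eq_inner)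
    then have "norm (X *v u) \<le> norm v" by (rule power2_le_imp_le) simp
    then show ?thesis using e by simp
  qed
  have "norm (Gf ** Si) = norm ((G + transpose G) ** (X ** Si))"
    by (simp add: Gf matrix_mul_assoc)
  also have "\<dots> \<le> norm (G + transpose G)"
    by (rule row_bound) (rule transpose_opbound[OF opb])
  also have "\<dots> \<le> norm G + norm (transpose G)" by (rule norm_triangle_ineq)
  also have "\<dots> = 2 * norm G" by (simp add: norm_transpose)
  also have "\<dots> \<le> 2 * L * norm (X ** transpose X - Mstar)" using Gb by simp
  finally have part2: "dual_local_norm X \<eta> Gf \<le> 2 * L * norm (X ** transpose X - Mstar)"
    unfolding dual_local_norm_def H_def[symmetric] S_def[symmetric] Si_def[symmetric] .
  show ?thesis using part1 part2 unfolding Gf_def Hi_def H_def by simp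
qed

end
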